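(* Let ${\cal H}\subset{\cal H}_0$, ${\mathcal D}$, $b$, $\mu_\ell^{-1}$, $\epsilon_\ell$, $a_\ell$ ($\ell=1,2$) be as in the context (the standing assumptions there hold), let ${\cal H}_N\subset{\cal H}$ be a finite-dimensional subspace with associated Galerkin matrices $\mathsf A_1,\mathsf A_2$ and $\mathsf D$, $m_\pm$ as in the context. If there exists $0<C_{{\rm dis},N,2}<\infty$ such that $$\inf_{u_N\in{\cal H}_N\setminus\{0\}}\sup_{v_N\in{\cal H}_N\setminus\{0\}}\frac{|a_2(u_N,v_N)|}{\|u_N\|_{{\cal H}}\|v_N\|_{{\cal H}}}\ge\frac{1}{C_{{\rm dis},N,2}}$$ and, for all $v_N\in{\cal H}_N\setminus\{0\}$, $\sup_{u_N\in{\cal H}_N\setminus\{0\}}|a_2(u_N,v_N)|>0$, then $\mathsf A_2^{-1}$ exists and $$\max\Big\{\|\mathsf I-\mathsf A_2^{-1}\mathsf A_1\|_{\mathsf D},\ \|\mathsf I-\mathsf A_1\mathsf A_2^{-1}\|_{\mathsf D^{-1}}\Big\}\le\Big(\|\mu_1^{-1}-\mu_2^{-1}\|_{{\cal H}_0\to{\cal H}_0}+\|\epsilon_1-\epsilon_2\|_{{\cal H}_0\to{\cal H}_0}\Big)C_{{\rm dis},N,2}.$$ Furthermore, if $\mu_1=\mu_2$, then $$\max\Big\{\|\mathsf I-\mathsf A_2^{-1}\mathsf A_1\|_2,\ \|\mathsf I-\mathsf A_1\mathsf A_2^{-1}\|_2\Big\}\le\frac{m_+}{m_-}\|\epsilon_1-\epsilon_2\|_{{\cal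 H}_0\to{\cal H}_0}C_{{\rm dis},N,2}.$$
   Context: Standing assumptions: ${\cal H}\subset{\cal H}_0$ are complex Hilbert spaces with $\|v\|_{{\cal H}_0}\le\|v\|_{{\cal H}}$ for $v\in{\cal H}$, and ${\cal H}_0$ is identified with its dual so that ${\cal H}\subset{\cal H}_0\subset{\cal H}^*$. ${\mathcal D}:{\cal H}\to{\cal H}_0$ is linear with $\|{\mathcal D}\|_{{\cal H}\to{\cal H}_0}\le 1$; $b(\cdot,\cdot)$ is a continuous sesquilinear form on ${\cal H}$; for $\ell=1,2$, $\mu_\ell^{-1}:{\cal H}_0\to{\cal H}_0$ and $\epsilon_\ell:{\cal H}_0\to{\cal H}_0$ are bounded linear operators, and $a_\ell(u,v):=(\mu_\ell^{-1}{\mathcal D}u,{\mathcal D}v)_{{\cal H}_0}+b(u,v)-(\epsilon_\ell u,v)_{{\cal H}_0}$. For $\ell=1,2$ there exist $C_{{\rm G1},\ell},C_{{\rm G2},\ell}>0$ with $|a_\ell(v,v)+C_{{\rm G2},\ell}\|v\|_{{\cal H}_0}^2|\ge C_{{\rm G1},\ell}\|v\|_{{\cal H}}^2$ for all $v\in{\cal H}$. Discrete notation: ${\cal H}_N\subset{\cal H}$ has basis $\{\phi_j\}_{j=1}^N$; $(\mathsf{A}_\ell)_{ij}=a_\ell(\phi_j,\phi_i)$. $\mathsf{D}$ is the Hermitian positive-definite matrix such that, writing $\|\mathbf V\|_{\mathsf D}:=(\mathsf D\mathbf V,\mathbf V)_2^{1/2}$, one has $\|\sum_j V_j\phi_j\|_{{\cal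 H}}=\|\mathbf V\|_{\mathsf D}$ for all $\mathbf V\in\mathbb{C}^N$; $\|\mathbf V\|_{\mathsf D^{-1}}:=(\mathsf D^{-1}\mathbf V,\mathbf V)_2^{1/2}$; matrix norms $\|\cdot\|_{\mathsf D}$, $\|\cdot\|_{\mathsf D^{-1}}$, $\|\cdot\|_2$ are those induced by the corresponding vector norms ($\|\cdot\|_2$ Euclidean). $m_\pm>0$ are such that $m_-\|\mathbf V\|_2\le\|\sum_jV_j\phi_j\|_{{\cal H}_0}\le m_+\|\mathbf V\|_2$ for all $\mathbf V\in\mathbb{C}^N$. *)

theory Defs
  imports "HOL-Analysis.Analysis"
begin

text \<open>Complex inner product spaces are modelled as a carrier set S inside a complex vector space given by
an explicit scalar multiplication sc (with vector_space sc) together with an explicit sesquilinear form ip (linear in the first argument,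
conjugate-linear in the second).\<close>

definition ipnorm :: "('v \<Rightarrow> 'v \<Rightarrow> complex) \<Rightarrow> 'v \<Rightarrow> real" where
  "ipnorm ip x = sqrt (Re (ip x x))"

definition cinner_space :: "(complex \<Rightarrow> 'v \<Rightarrow> 'v) \<Rightarrow> 'v::ab_group_add set \<Rightarrow> ('v \<Rightarrow> 'v \<Rightarrow> complex) \<Rightarrow> bool" where
  "cinner_space sc S ip \<longleftrightarrow>
     0 \<in> S \<and> (\<forall>x\<in>S. \<forall>y\<in>S. x + y \<in> S) \<and> (\<forall>c. \<forall>x\<in>S. sc c x \<in> S) \<and>
     (\<forall>x\<in>S. \<forall>y\<in>S. \<forall>z\<in>S. ip (x + y) z = ip x z + ip y z) \<and>
     (\<forall>c. \<forall>x\<in>S. \<forall>y\<in>S. ip (sc c x) y = c * ip x y) \<and>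
     (\<forall>x\<in>S. \<forall>y\<in>S. ip y x = cnj (ip x y)) \<and>
     (\<forall>x\<in>S. Im (ip x x) = 0 \<and> Re (ip x x) \<ge> 0) \<and>
     (\<forall>x\<in>S. ip x x = 0 \<longrightarrow> x = 0)"

definition hilbert_space :: "(complex \<Rightarrow> 'v \<Rightarrow> 'v) \<Rightarrow> 'v::ab_group_add set \<Rightarrow> ('v \<Rightarrow> 'v \<Rightarrow> complex) \<Rightarrow> bool" where
  "hilbert_space sc S ip \<longleftrightarrow> cinner_space sc S ip \<and>
     (\<forall>X. (\<forall>n. X n \<in> S) \<and>
          (\<forall>e>0. \<exists>M. \<forall>m\<ge>M. \<forall>n\<ge>M. ipnorm ip (X m - X n) < e) \<longrightarrow>
          (\<exists>l\<in>S. (\<lambda>n. ipnorm ip (X n - l)) \<longlonglongrightarrow> 0))"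

definition clinear_on :: "(complex \<Rightarrow> 'v \<Rightarrow> 'v) \<Rightarrow> (complex \<Rightarrow> 'w \<Rightarrow> 'w) \<Rightarrow> 'v::ab_group_add set \<Rightarrow> ('v \<Rightarrow> 'w::ab_group_add) \<Rightarrow> bool" where
  "clinear_on sc sc' S T \<longleftrightarrow> (\<forall>x\<in>S. \<forall>y\<in>S. T (x + y) = T x + T y) \<and>
     (\<forall>c. \<forall>x\<in>S. T (sc c x) = sc' c (T x))"

text \<open>Bounded linear operator on the Hilbert space H0 (= the whole type) w.r.t. the norm of ip0.\<close>
definition bounded_op :: "(complex \<Rightarrow> 'v \<Rightarrow> 'v) \<Rightarrow> ('v \<Rightarrow> 'v \<Rightarrow> complex) \<Rightarrow> ('v::ab_group_add \<Rightarrow> 'v) \<Rightarrow> bool" where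
  "bounded_op sc ip0 T \<longleftrightarrow> clinear_on sc sc UNIV T \<and>
     (\<exists>K. \<forall>x. ipnorm ip0 (T x) \<le> K * ipnorm ip0 x)"

definition opnorm :: "('v \<Rightarrow> 'v \<Rightarrow> complex) \<Rightarrow> ('v::ab_group_add \<Rightarrow> 'v) \<Rightarrow> real" where
  "opnorm ip0 T = Sup {ipnorm ip0 (T x) / ipnorm ip0 x | x. x \<noteq> 0}"

definition cont_sesq :: "(complex \<Rightarrow> 'v \<Rightarrow> 'v) \<Rightarrow> 'v::ab_group_add set \<Rightarrow> ('v \<Rightarrow> 'v \<Rightarrow> complex) \<Rightarrow> ('v \<Rightarrow> 'v \<Rightarrow> complex) \<Rightarrow> bool" where
  "cont_sesq sc S ip b \<longleftrightarrow>
     (\<forall>x\<in>S. \<forall>y\<in>S. \<forall>z\<in>S. b (x + y) z = b x z + b y z) \<and>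
     (\<forall>x\<in>S. \<forall>y\<in>S. \<forall>z\<in>S. b z (x + y) = b z x + b z y) \<and>
     (\<forall>c. \<forall>x\<in>S. \<forall>y\<in>S. b (sc c x) y = c * b x y) \<and>
     (\<forall>c. \<forall>x\<in>S. \<forall>y\<in>S. b x (sc c y) = cnj c * b x y) \<and>
     (\<exists>K. \<forall>x\<in>S. \<forall>y\<in>S. cmod (b x y) \<le> K * ipnorm ip x * ipnorm ip y)"

definition aform :: "('v \<Rightarrow> 'v \<Rightarrow> complex) \<Rightarrow> ('v \<Rightarrow> 'v) \<Rightarrow> ('v \<Rightarrow> 'v \<Rightarrow> complex)
    \<Rightarrow> ('v \<Rightarrow> 'v) \<Rightarrow> ('v \<Rightarrow> 'v) \<Rightarrow> 'v \<Rightarrow> 'v \<Rightarrow> complex" where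
  "aform ip0 Dop b muinv eps u v = ip0 (muinv (Dop u)) (Dop v) + b u v - ip0 (eps u) v"

definition ip2 :: "complex^'n \<Rightarrow> complex^'n \<Rightarrow> complex" where
  "ip2 V W = (\<Sum>i\<in>UNIV. V $ i * cnj (W $ i))"

definition comb :: "(complex \<Rightarrow> 'v \<Rightarrow> 'v) \<Rightarrow> ('n::finite \<Rightarrow> 'v::ab_group_add) \<Rightarrow> complex^'n \<Rightarrow> 'v" where
  "comb sc phi V = (\<Sum>j\<in>UNIV. sc (V $ j) (phi j))"

definition wnorm :: "complex^'n^'n \<Rightarrow> complex^'n \<Rightarrow> real" where
  "wnorm M V = sqrt (Re (ip2 (M *v V) V))"

definition matnorm :: "(complex^'n \<Rightarrow> real) \<Rightarrow> complex^'n^'n \<Rightarrow> real" where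
  "matnorm nv M = Sup {nv (M *v V) / nv V | V. V \<noteq> 0}"

end

theory Submission imports Defs begin

definition hermf :: "(complex \<Rightarrow> 'v \<Rightarrow> 'v) \<Rightarrow> 'v::ab_group_add set \<Rightarrow> ('v \<Rightarrow> 'v \<Rightarrow> complex) \<Rightarrow> bool" where
 "hermf sc S f \<longleftrightarrow> (\<forall>x\<in>S. \<forall>y\<in>S. x + y \<in> S) \<and> (\<forall>c. \<forall>x\<in>S. sc c x \<in> S) \<and>
   (\<forall>x\<in>S. \<forall>y\<in>S. \<forall>z\<in>S. f (x + y) z = f x z + f y z) \<and>
   (\<forall>c. \<forall>x\<in>S. \<forall>y\<in>S. f (sc c x) y = c * f x y) \<and>
   (\<forall>x\<in>S. \<forall>y\<in>S. f y x = cnj (f x y)) \<and>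
   (\<forall>x\<in>S. Im (f x x) = 0 \<and> Re (f x x) \<ge> 0) \<and> 0 \<in> S"

lemma cinner_hermf: "cinner_space sc S ip \<Longrightarrow> hermf sc S ip"
  unfolding cinner_space_def hermf_def by (elim conjE) (intro conjI; assumption)

lemma real_cs_aux:
  fixes a bb P :: real
  assumes key: "\<And>t. 0 \<le> a - 2*t*P + t^2*P*bb" and a: "a \<ge> 0" and bb: "bb \<ge> 0" and P: "P \<ge> 0"
  shows "P \<le> a * bb"
proof (cases "P = 0")
  case True then show ?thesis using a bb by simp
next
  case False
  then have Pp: "P > 0" using P by simp
  show ?thesis
  proof (cases "bb = 0")
    case True
    have "0 \<le> a - 2*((a+1)/P)*P" using key[of "(a+1)/P"] True by simp
    also have "\<dots> = a - 2*(a+1)" using Pp by simp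
    finally show ?thesis using a by simp
  next
    case False
    then have bp: "bb > 0" using bb by simp
    have "0 \<le> a - 2*(1/bb)*P + (1/bb)^2*P*bb" using key[of "1/bb"] .
    also have "\<dots> = a - P/bb" using bp by (simp add: power2_eq_square field_simps)
    finally have "P/bb \<le> a" by simp
    then show ?thesis using bp by (simp add: pos_divide_le_eq)
  qed
qed

lemma hermf_cs:
  assumes h: "hermf sc S f" and x: "x \<in> S" and y: "y \<in> S"
  shows "cmod (f x y) \<le> sqrt (Re (f x x)) * sqrt (Re (f y y))"
proof -
  define w where "w = f x y"
  define a where "a = Re (f x x)"
  define bb where "bb = Re (f y y)"
  define P where "P = (cmod w)^2"
  note hh = h[unfolded hermf_def]
  note cl = hh[THEN conjunct1, rule_format]
  note cs = hh[THEN conjunct2, THEN conjunct1, rule_format]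
  note ad = hh[THEN conjunct2, THEN conjunct2, THEN conjunct1, rule_format]
  note scl = hh[THEN conjunct2, THEN conjunct2, THEN conjunct2, THEN conjunct1, rule_format]
  note sy = hh[THEN conjunct2, THEN conjunct2, THEN conjunct2, THEN conjunct2, THEN conjunct1, rule_format]
  note ps = hh[THEN conjunct2, THEN conjunct2, THEN conjunct2, THEN conjunct2, THEN conjunct2, THEN conjunct1, rule_format]
  have fxx: "f x x = of_real a" using ps[OF x] unfolding a_def by (simp add: complex_eq_iff)
  have fyy: "f y y = of_real bb" using ps[OF y] unfolding bb_def by (simp add: complex_eq_iff)
  have fyx: "f y x = cnj w" using sy[OF x y] unfolding w_def .
  have a0: "a \<ge> 0" and b0: "bb \<ge> 0" using ps[OF x] ps[OF y] unfolding a_def bb_def by auto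
  have key: "0 \<le> a - 2*t*P + t^2*P*bb" for t
  proof -
    define c where "c = - of_real t * w"
    define z where "z = x + sc c y"
    have yS: "sc c y \<in> S" using cs[OF y] .
    have zS: "z \<in> S" using cl[OF x yS] unfolding z_def .
    have e1: "f z z = f x z + c * f y z"
      unfolding z_def using ad[OF x yS, of "x + sc c y"] scl[OF y, of "x + sc c y"] zS z_def by simp
    have e2: "f x z = cnj (f x x + c * f y x)"
      using sy[OF zS x] ad[OF x yS x] scl[OF y x] unfolding z_def by simp
    have e3: "f y z = cnj (f x y + c * f y y)"
      using sy[OF zS y] ad[OF x yS y] scl[OF y y] unfolding z_def by simp
    have "f z z = of_real a + cnj c * w + c * (cnj w + cnj c * of_real bb)"
      using e1 e2 e3 fxx fyy fyx w_def by simp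
    also have "\<dots> = of_real a - 2 * of_real t * (w * cnj w) + (of_real t)^2 * (w * cnj w) * of_real bb"
      unfolding c_def by (simp add: algebra_simps power2_eq_square)
    also have "\<dots> = of_real (a - 2*t*P + t^2*P*bb)"
      unfolding P_def complex_norm_square[symmetric] by simp
    finally have "Re (f z z) = a - 2*t*P + t^2*P*bb" by simp
    then show ?thesis using ps[OF zS] by auto
  qed
  have "P \<le> a * bb" by (rule real_cs_aux[OF key a0 b0]) (simp add: P_def)
  then have "sqrt P \<le> sqrt (a*bb)" by simp
  then show ?thesis unfolding P_def a_def bb_def w_def by (simp add: real_sqrt_mult)
qed

definition sesqf :: "(complex \<Rightarrow> 'v \<Rightarrow> 'v) \<Rightarrow> 'v::ab_group_add set \<Rightarrow> ('v \<Rightarrow> 'v \<Rightarrow> complex) \<Rightarrow> bool" where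
 "sesqf sc S f \<longleftrightarrow> (\<forall>x\<in>S. \<forall>y\<in>S. x + y \<in> S) \<and> (\<forall>c. \<forall>x\<in>S. sc c x \<in> S) \<and> 0 \<in> S \<and>
   (\<forall>x\<in>S. \<forall>y\<in>S. \<forall>z\<in>S. f (x + y) z = f x z + f y z) \<and>
   (\<forall>x\<in>S. \<forall>y\<in>S. \<forall>z\<in>S. f z (x + y) = f z x + f z y) \<and>
   (\<forall>c. \<forall>x\<in>S. \<forall>y\<in>S. f (sc c x) y = c * f x y) \<and>
   (\<forall>c. \<forall>x\<in>S. \<forall>y\<in>S. f x (sc c y) = cnj c * f x y)"

lemma hermf_sesqf:
  assumes h: "hermf sc S f" shows "sesqf sc S f"
proof -
  note hh = h[unfolded hermf_def]
  note cl = hh[THEN conjunct1, rule_format]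
  note cs = hh[THEN conjunct2, THEN conjunct1, rule_format]
  note ad = hh[THEN conjunct2, THEN conjunct2, THEN conjunct1, rule_format]
  note scl = hh[THEN conjunct2, THEN conjunct2, THEN conjunct2, THEN conjunct1, rule_format]
  note sy = hh[THEN conjunct2, THEN conjunct2, THEN conjunct2, THEN conjunct2, THEN conjunct1, rule_format]
  note z = hh[THEN conjunct2, THEN conjunct2, THEN conjunct2, THEN conjunct2, THEN conjunct2, THEN conjunct2]
  have ad2: "f z (x + y) = f z x + f z y" if "x \<in> S" "y \<in> S" "z \<in> S" for x y z
  proof -
    have "f z (x + y) = cnj (f (x + y) z)" using sy[OF cl[OF that(1,2)] that(3)] .
    also have "\<dots> = cnj (f x z) + cnj (f y z)" using ad[OF that] by simp
    also have "\<dots> = f z x + f z y" using sy[OF that(1,3)] sy[OF that(2,3)] by simp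
    finally show ?thesis .
  qed
  have sc2: "f x (sc c y) = cnj c * f x y" if "x \<in> S" "y \<in> S" for x y c
  proof -
    have "f x (sc c y) = cnj (f (sc c y) x)" using sy[OF cs[OF that(2)] that(1)] .
    also have "\<dots> = cnj c * cnj (f y x)" using scl[OF that(2,1)] by simp
    also have "\<dots> = cnj c * f x y" using sy[OF that(1,2)] by simp
    finally show ?thesis .
  qed
  show ?thesis unfolding sesqf_def using cl cs z ad ad2 scl sc2 by simp
qed

lemma sesqf_sum_in:
  assumes h: "sesqf sc S f" and p: "\<And>j. p j \<in> S" and fin: "finite I"
  shows "(\<Sum>j\<in>I. sc (c j) (p j)) \<in> S"
  using fin
proof (induction I rule: finite_induct)
  case empty then show ?case using h unfolding sesqf_def by simp
next
  case (insert j I)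
  then show ?case using h p unfolding sesqf_def by simp
qed

lemma sesqf_zero:
  assumes h: "sesqf sc S f" and z: "z \<in> S"
  shows "f 0 z = 0" "f z 0 = 0"
proof -
  have S0: "0 \<in> S" using h unfolding sesqf_def by simp
  have "f (0 + 0) z = f 0 z + f 0 z" using h S0 z unfolding sesqf_def by blast
  then show "f 0 z = 0" by simp
  have "f z (0 + 0) = f z 0 + f z 0" using h S0 z unfolding sesqf_def by blast
  then show "f z 0 = 0" by simp
qed

lemma sesqf_sum_left:
  assumes h: "sesqf sc S f" and p: "\<And>j. p j \<in> S" and fin: "finite I" and w: "w \<in> S"
  shows "f (\<Sum>j\<in>I. sc (c j) (p j)) w = (\<Sum>j\<in>I. c j * f (p j) w)"
  using fin
proof (induction I rule: finite_induct)
  case empty then show ?case using sesqf_zero[OF h w] by simp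
next
  case (insert j I)
  have i1: "sc (c j) (p j) \<in> S" using h p unfolding sesqf_def by blast
  have i2: "(\<Sum>j\<in>I. sc (c j) (p j)) \<in> S" by (rule sesqf_sum_in[OF h p insert(1)])
  have "f (\<Sum>j\<in>insert j I. sc (c j) (p j)) w = f (sc (c j) (p j) + (\<Sum>j\<in>I. sc (c j) (p j))) w"
    using insert by simp
  also have "\<dots> = f (sc (c j) (p j)) w + f (\<Sum>j\<in>I. sc (c j) (p j)) w"
    using h i1 i2 w unfolding sesqf_def by blast
  also have "\<dots> = c j * f (p j) w + (\<Sum>j\<in>I. c j * f (p j) w)"
    using h p w insert unfolding sesqf_def by simp
  finally show ?case using insert by simp
qed

lemma sesqf_sum_right:
  assumes h: "sesqf sc S f" and p: "\<And>j. p j \<in> S" and fin: "finite I" and w: "w \<in> S"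
  shows "f w (\<Sum>j\<in>I. sc (c j) (p j)) = (\<Sum>j\<in>I. cnj (c j) * f w (p j))"
  using fin
proof (induction I rule: finite_induct)
  case empty then show ?case using sesqf_zero[OF h w] by simp
next
  case (insert j I)
  have i1: "sc (c j) (p j) \<in> S" using h p unfolding sesqf_def by blast
  have i2: "(\<Sum>j\<in>I. sc (c j) (p j)) \<in> S" by (rule sesqf_sum_in[OF h p insert(1)])
  have "f w (\<Sum>j\<in>insert j I. sc (c j) (p j)) = f w (sc (c j) (p j) + (\<Sum>j\<in>I. sc (c j) (p j)))"
    using insert by simp
  also have "\<dots> = f w (sc (c j) (p j)) + f w (\<Sum>j\<in>I. sc (c j) (p j))"
    using h i1 i2 w unfolding sesqf_def by blast
  also have "\<dots> = cnj (c j) * f w (p j) + (\<Sum>j\<in>I. cnj (c j) * f w (p j))"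
    using h p w insert unfolding sesqf_def by simp
  finally show ?case using insert by simp
qed

lemma sesqf_matrix:
  fixes phi :: "'n::finite \<Rightarrow> 'v::ab_group_add" and A :: "complex^'n^'n"
  assumes h: "sesqf sc S f" and p: "\<And>j. phi j \<in> S"
    and A: "\<forall>i j. A $ i $ j = f (phi j) (phi i)"
  shows "f (comb sc phi V) (comb sc phi Y) = ip2 (A *v V) Y"
proof -
  have cY: "comb sc phi Y \<in> S" unfolding comb_def by (rule sesqf_sum_in[OF h p]) simp
  have "f (comb sc phi V) (comb sc phi Y) = (\<Sum>j\<in>UNIV. V $ j * f (phi j) (comb sc phi Y))"
    unfolding comb_def[of sc phi V] by (rule sesqf_sum_left[OF h p _ cY]) simp
  also have "\<dots> = (\<Sum>j\<in>UNIV. V $ j * (\<Sum>i\<in>UNIV. cnj (Y $ i) * f (phi j) (phi i)))"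
  proof -
    have "f (phi j) (\<Sum>i\<in>UNIV. sc (Y $ i) (phi i)) = (\<Sum>i\<in>UNIV. cnj (Y $ i) * f (phi j) (phi i))" for j
      by (rule sesqf_sum_right[OF h p]) (simp_all add: p)
    then show ?thesis unfolding comb_def[of sc phi Y] by simp
  qed
  also have "\<dots> = (\<Sum>j\<in>UNIV. \<Sum>i\<in>UNIV. A $ i $ j * V $ j * cnj (Y $ i))"
    unfolding sum_distrib_left using A by (simp add: mult.commute mult.left_commute)
  also have "\<dots> = (\<Sum>i\<in>UNIV. \<Sum>j\<in>UNIV. A $ i $ j * V $ j * cnj (Y $ i))"
    by (rule sum.swap)
  also have "\<dots> = (\<Sum>i\<in>UNIV. (\<Sum>j\<in>UNIV. A $ i $ j * V $ j) * cnj (Y $ i))"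
    by (simp add: sum_distrib_right)
  also have "\<dots> = ip2 (A *v V) Y"
    unfolding ip2_def matrix_vector_mult_def by simp
  finally show ?thesis .
qed

lemma sesqf_parts:
  assumes h: "sesqf sc S f"
  shows "\<And>x y. x \<in> S \<Longrightarrow> y \<in> S \<Longrightarrow> x + y \<in> S"
    and "\<And>c x. x \<in> S \<Longrightarrow> sc c x \<in> S"
    and "0 \<in> S"
    and "\<And>x y z. x \<in> S \<Longrightarrow> y \<in> S \<Longrightarrow> z \<in> S \<Longrightarrow> f (x + y) z = f x z + f y z"
    and "\<And>x y z. x \<in> S \<Longrightarrow> y \<in> S \<Longrightarrow> z \<in> S \<Longrightarrow> f z (x + y) = f z x + f z y"
    and "\<And>c x y. x \<in> S \<Longrightarrow> y \<in> S \<Longrightarrow> f (sc c x) y = c * f x y"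
    and "\<And>c x y. x \<in> S \<Longrightarrow> y \<in> S \<Longrightarrow> f x (sc c y) = cnj c * f x y"
proof -
  note hh = h[unfolded sesqf_def]
  show "\<And>x y. x \<in> S \<Longrightarrow> y \<in> S \<Longrightarrow> x + y \<in> S" using hh[THEN conjunct1] by simp
  show "\<And>c x. x \<in> S \<Longrightarrow> sc c x \<in> S" using hh[THEN conjunct2, THEN conjunct1] by simp
  show "0 \<in> S" using hh[THEN conjunct2, THEN conjunct2, THEN conjunct1] by simp
  show "\<And>x y z. x \<in> S \<Longrightarrow> y \<in> S \<Longrightarrow> z \<in> S \<Longrightarrow> f (x + y) z = f x z + f y z"
    using hh[THEN conjunct2, THEN conjunct2, THEN conjunct2, THEN conjunct1] by simp
  show "\<And>x y z. x \<in> S \<Longrightarrow> y \<in> S \<Longrightarrow> z \<in> S \<Longrightarrow> f z (x + y) = f z x + f z y"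
    using hh[THEN conjunct2, THEN conjunct2, THEN conjunct2, THEN conjunct2, THEN conjunct1] by simp
  show "\<And>c x y. x \<in> S \<Longrightarrow> y \<in> S \<Longrightarrow> f (sc c x) y = c * f x y"
    using hh[THEN conjunct2, THEN conjunct2, THEN conjunct2, THEN conjunct2, THEN conjunct2, THEN conjunct1] by simp
  show "\<And>c x y. x \<in> S \<Longrightarrow> y \<in> S \<Longrightarrow> f x (sc c y) = cnj c * f x y"
    using hh[THEN conjunct2, THEN conjunct2, THEN conjunct2, THEN conjunct2, THEN conjunct2, THEN conjunct2] by simp
qed

lemma hermf_parts:
  assumes h: "hermf sc S f"
  shows "\<And>x y. x \<in> S \<Longrightarrow> y \<in> S \<Longrightarrow> f y x = cnj (f x y)"
    and "\<And>x. x \<in> S \<Longrightarrow> Im (f x x) = 0 \<and> Re (f x x) \<ge> 0"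
  by (rule h[unfolded hermf_def, THEN conjunct2, THEN conjunct2, THEN conjunct2, THEN conjunct2, THEN conjunct1, rule_format], assumption+)
    (rule h[unfolded hermf_def, THEN conjunct2, THEN conjunct2, THEN conjunct2, THEN conjunct2, THEN conjunct2, THEN conjunct1, rule_format], assumption)

lemma ipnorm_sq:
  assumes h: "hermf sc S f" and x: "x \<in> S"
  shows "(ipnorm f x)^2 = Re (f x x)" "ipnorm f x \<ge> 0"
  using hermf_parts(2)[OF h x] unfolding ipnorm_def by auto

lemma ipnorm_cs:
  assumes h: "hermf sc S f" and x: "x \<in> S" and y: "y \<in> S"
  shows "cmod (f x y) \<le> ipnorm f x * ipnorm f y"
  using hermf_cs[OF h x y] unfolding ipnorm_def .

lemma ipnorm_triangle:
  assumes h: "hermf sc S f" and x: "x \<in> S" and y: "y \<in> S"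
  shows "ipnorm f (x + y) \<le> ipnorm f x + ipnorm f y"
proof -
  have hs: "sesqf sc S f" by (rule hermf_sesqf[OF h])
  have xy: "x + y \<in> S" using sesqf_parts(1)[OF hs x y] .
  have ad1: "f (x + y) (x + y) = f x (x + y) + f y (x + y)" using sesqf_parts(4)[OF hs x y xy] .
  have ad2: "f x (x + y) = f x x + f x y" using sesqf_parts(5)[OF hs x y x] .
  have ad3: "f y (x + y) = f y x + f y y" using sesqf_parts(5)[OF hs x y y] .
  have "Re (f y x) = Re (f x y)" using hermf_parts(1)[OF h x y] by simp
  then have "Re (f (x + y) (x + y)) = Re (f x x) + 2 * Re (f x y) + Re (f y y)"
    using ad1 ad2 ad3 by simp
  also have "\<dots> \<le> (ipnorm f x)^2 + 2 * (ipnorm f x * ipnorm f y) + (ipnorm f y)^2"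
    using ipnorm_sq[OF h x] ipnorm_sq[OF h y] ipnorm_cs[OF h x y] complex_Re_le_cmod[of "f x y"] by simp
  also have "\<dots> = (ipnorm f x + ipnorm f y)^2" by (simp add: power2_eq_square algebra_simps)
  finally have "(ipnorm f (x + y))^2 \<le> (ipnorm f x + ipnorm f y)^2" using ipnorm_sq[OF h xy] by simp
  then show ?thesis using ipnorm_sq(2)[OF h x] ipnorm_sq(2)[OF h y] ipnorm_sq(2)[OF h xy]
    by (simp add: power2_le_iff_abs_le)
qed

lemma ipnorm_neg:
  assumes vs: "vector_space sc" and h: "hermf sc UNIV f"
  shows "ipnorm f (- y) = ipnorm f y"
proof -
  have md: "module sc" using vs module_iff_vector_space by blast
  have e: "- y = sc (-1) y" using module.scale_minus_left[OF md, of 1 y] module.scale_one[OF md, of y] by simp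
  have hs: "sesqf sc UNIV f" by (rule hermf_sesqf[OF h])
  have "f (sc (-1) y) (sc (-1) y) = (-1) * f y (sc (-1) y)" using sesqf_parts(6)[OF hs] by simp
  also have "\<dots> = (-1) * (cnj (-1) * f y y)" using sesqf_parts(7)[OF hs] by simp
  finally have "f (- y) (- y) = f y y" using e by simp
  then show ?thesis unfolding ipnorm_def by simp
qed

lemma ipnorm_diff_le:
  assumes vs: "vector_space sc" and h: "hermf sc UNIV f"
  shows "ipnorm f (x - y) \<le> ipnorm f x + ipnorm f y"
  using ipnorm_triangle[OF h, of x "- y"] ipnorm_neg[OF vs h, of y] by simp

lemma ipnorm_pos:
  assumes h: "hermf sc S f" and x: "x \<in> S" and def: "\<forall>x\<in>S. f x x = 0 \<longrightarrow> x = 0" and nz: "x \<noteq> 0"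
  shows "ipnorm f x > 0"
proof -
  have "f x x \<noteq> 0" using def x nz by blast
  then have "Re (f x x) \<noteq> 0" using hermf_parts(2)[OF h x] by (simp add: complex_eq_iff)
  then have "Re (f x x) > 0" using hermf_parts(2)[OF h x] by simp
  then show ?thesis unfolding ipnorm_def by simp
qed

lemma ipnorm_zero:
  assumes h: "hermf sc S f" and S0: "0 \<in> S"
  shows "ipnorm f 0 = 0"
  using sesqf_zero[OF hermf_sesqf[OF h] S0] unfolding ipnorm_def by simp

lemma opnorm_bound:
  assumes h: "hermf sc UNIV f" and def: "\<forall>x. f x x = 0 \<longrightarrow> x = 0"
    and K: "\<forall>x. ipnorm f (T x) \<le> K * ipnorm f x" and T0: "T 0 = 0"
  shows "ipnorm f (T x) \<le> opnorm f T * ipnorm f x"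
proof (cases "x = 0")
  case True then show ?thesis using T0 ipnorm_zero[OF h] by simp
next
  case False
  have p: "ipnorm f x > 0" using ipnorm_pos[OF h _ _ False] def by simp
  have bdd: "bdd_above {ipnorm f (T x) / ipnorm f x | x. x \<noteq> 0}"
  proof (rule bdd_aboveI)
    fix r assume "r \<in> {ipnorm f (T x) / ipnorm f x | x. x \<noteq> 0}"
    then obtain y where r: "r = ipnorm f (T y) / ipnorm f y" and y: "y \<noteq> 0" by blast
    have "ipnorm f y > 0" using ipnorm_pos[OF h _ _ y] def by simp
    then show "r \<le> K" using K r by (simp add: divide_le_eq)
  qed
  have "ipnorm f (T x) / ipnorm f x \<le> opnorm f T"
    unfolding opnorm_def by (rule cSup_upper[OF _ bdd]) (use False in blast)
  then show ?thesis using p by (simp add: divide_le_eq)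
qed

lemma opnorm_nonneg:
  fixes T :: "'v::ab_group_add \<Rightarrow> 'v" and x0 :: 'v
  assumes h: "hermf sc UNIV f" and def: "\<forall>x. f x x = 0 \<longrightarrow> x = 0"
    and K: "\<forall>x. ipnorm f (T x) \<le> K * ipnorm f x" and nz: "x0 \<noteq> 0"
  shows "opnorm f T \<ge> 0"
proof -
  have bdd: "bdd_above {ipnorm f (T x) / ipnorm f x | x. x \<noteq> 0}"
  proof (rule bdd_aboveI)
    fix r assume "r \<in> {ipnorm f (T x) / ipnorm f x | x. x \<noteq> 0}"
    then obtain y where r: "r = ipnorm f (T y) / ipnorm f y" and y: "y \<noteq> 0" by blast
    have "ipnorm f y > 0" using ipnorm_pos[OF h _ _ y] def by simp
    then show "r \<le> K" using K r by (simp add: divide_le_eq)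
  qed
  have "ipnorm f (T x0) / ipnorm f x0 \<le> opnorm f T"
    unfolding opnorm_def by (rule cSup_upper[OF _ bdd]) (use nz in blast)
  moreover have "ipnorm f (T x0) / ipnorm f x0 \<ge> 0" using ipnorm_sq(2)[OF h] by simp
  ultimately show ?thesis by linarith
qed

lemma matnorm_le:
  fixes M :: "complex^'n^'n"
  assumes b: "\<And>V. V \<noteq> 0 \<Longrightarrow> nv (M *v V) \<le> c * nv V" and p: "\<And>V. V \<noteq> 0 \<Longrightarrow> nv V > 0"
  shows "matnorm nv M \<le> c"
  unfolding matnorm_def
proof (rule cSup_least)
  have "(axis undefined 1 :: complex^'n) \<noteq> 0" by (simp add: axis_def vec_eq_iff)
  then show "{nv (M *v V) / nv V |V. V \<noteq> 0} \<noteq> {}" by blast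
next
  fix r assume "r \<in> {nv (M *v V) / nv V |V. V \<noteq> 0}"
  then obtain V where r: "r = nv (M *v V) / nv V" and V: "V \<noteq> 0" by blast
  show "r \<le> c" using b[OF V] p[OF V] r by (simp add: divide_le_eq)
qed

lemma ip2_sym: "ip2 V W = cnj (ip2 W V)"
  unfolding ip2_def by (simp add: mult.commute)

lemma ip2_add: "ip2 (V + W) Z = ip2 V Z + ip2 W Z"
  unfolding ip2_def by (simp add: distrib_right sum.distrib)

lemma ip2_scale: "ip2 (c *s V) Z = c * ip2 V Z"
  unfolding ip2_def vector_scalar_mult_def by (simp add: sum_distrib_left mult.assoc)

lemma ip2_diff: "ip2 (V - W) Z = ip2 V Z - ip2 W Z"
  unfolding ip2_def by (simp add: left_diff_distrib sum_subtractf)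

lemma ip2_self: "ip2 V V = of_real ((norm V)^2)"
proof -
  have "ip2 V V = (\<Sum>i\<in>UNIV. of_real ((cmod (V $ i))^2))"
    unfolding ip2_def by (simp only: complex_norm_square)
  also have "\<dots> = of_real (\<Sum>i\<in>UNIV. (cmod (V $ i))^2)" by simp
  also have "(\<Sum>i\<in>UNIV. (cmod (V $ i))^2) = (norm V)^2"
    unfolding norm_vec_def L2_set_def by (simp add: sum_nonneg)
  finally show ?thesis .
qed

lemma norm_ip2: "norm V = sqrt (Re (ip2 V V))"
  using ip2_self[of V] by simp

lemma dual_2:
  assumes b: "\<And>Y. cmod (ip2 Z Y) \<le> c * norm Y" and c: "c \<ge> 0"
  shows "norm Z \<le> c"
proof (cases "Z = 0")
  case True then show ?thesis using c by simp
next
  case False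
  have "(norm Z)^2 = Re (ip2 Z Z)" using ip2_self[of Z] by simp
  also have "\<dots> \<le> cmod (ip2 Z Z)" by (rule complex_Re_le_cmod)
  also have "\<dots> \<le> c * norm Z" by (rule b)
  finally have "norm Z * norm Z \<le> c * norm Z" by (simp add: power2_eq_square)
  then show ?thesis using False by simp
qed

lemma cs_2: "cmod (ip2 V Y) \<le> norm V * norm Y"
proof -
  have h: "hermf (*s) UNIV ip2"
    unfolding hermf_def
    by (intro conjI; (intro ballI allI, rule ip2_sym)?; simp add: ip2_add ip2_scale ip2_self)
  show ?thesis using hermf_cs[OF h, of V Y] by (simp add: norm_ip2)
qed

lemma hermf_D:
  fixes D :: "complex^'n::finite^'n"
  assumes D_herm: "\<forall>i j. D $ i $ j = cnj (D $ j $ i)"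
    and D_pd: "\<forall>V. V \<noteq> 0 \<longrightarrow> Im (ip2 (D *v V) V) = 0 \<and> Re (ip2 (D *v V) V) > 0"
  shows "hermf (*s) UNIV (\<lambda>X Y. ip2 (D *v X) Y)"
proof -
  have dh: "cnj (D $ i $ j) = D $ j $ i" for i j
    using arg_cong[OF D_herm[rule_format, of i j], of cnj] by simp
  have sy: "ip2 (D *v Y) X = cnj (ip2 (D *v X) Y)" for X Y
  proof -
    have "ip2 (D *v Y) X = (\<Sum>i\<in>UNIV. \<Sum>j\<in>UNIV. D $ i $ j * Y $ j * cnj (X $ i))"
      unfolding ip2_def matrix_vector_mult_def by (simp add: sum_distrib_right)
    also have "\<dots> = (\<Sum>j\<in>UNIV. \<Sum>i\<in>UNIV. D $ i $ j * Y $ j * cnj (X $ i))"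
      by (rule sum.swap)
    also have "\<dots> = cnj (\<Sum>j\<in>UNIV. \<Sum>i\<in>UNIV. D $ j $ i * X $ i * cnj (Y $ j))"
      by (simp add: dh mult.commute mult.left_commute)
    also have "\<dots> = cnj (ip2 (D *v X) Y)"
      unfolding ip2_def matrix_vector_mult_def by (simp add: sum_distrib_right)
    finally show ?thesis .
  qed
  have ps: "Im (ip2 (D *v V) V) = 0 \<and> Re (ip2 (D *v V) V) \<ge> 0" for V
    using D_pd[rule_format, of V] by (cases "V = 0") (auto simp: ip2_def)
  show ?thesis
    unfolding hermf_def
    by (intro conjI; (intro ballI allI, rule sy)?; simp add: ip2_add ip2_scale matrix_vector_right_distrib vector_scalar_commute ps)
qed

lemma matrix_inv_props:
  fixes A :: "complex^'n::finite^'n"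
  assumes "\<And>V. A *v V = 0 \<Longrightarrow> V = 0"
  shows "invertible A" "A ** matrix_inv A = mat 1" "matrix_inv A ** A = mat 1"
proof -
  have "\<exists>B. B ** A = mat 1" using assms matrix_left_invertible_ker by blast
  then show inv: "invertible A" using invertible_left_inverse by blast
  then have "\<exists>A'. A ** A' = mat 1 \<and> A' ** A = mat 1" unfolding invertible_def .
  then have "A ** matrix_inv A = mat 1 \<and> matrix_inv A ** A = mat 1"
    unfolding matrix_inv_def by (rule someI_ex)
  then show "A ** matrix_inv A = mat 1" "matrix_inv A ** A = mat 1" by auto
qed

lemma D_facts:
  fixes D :: "complex^'n::finite^'n"
  assumes D_herm: "\<forall>i j. D $ i $ j = cnj (D $ j $ i)"
    and D_pd: "\<forall>V. V \<noteq> 0 \<longrightarrow> Im (ip2 (D *v V) V) = 0 \<and> Re (ip2 (D *v V) V) > 0"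
  shows "D ** matrix_inv D = mat 1"
    and "\<And>V. wnorm (matrix_inv D) V = wnorm D (matrix_inv D *v V)"
    and "\<And>V Y. cmod (ip2 V Y) \<le> wnorm (matrix_inv D) V * wnorm D Y"
    and "\<And>Z c. (\<And>Y. cmod (ip2 Z Y) \<le> c * wnorm D Y) \<Longrightarrow> c \<ge> 0 \<Longrightarrow> wnorm (matrix_inv D) Z \<le> c"
    and "\<And>V. V \<noteq> 0 \<Longrightarrow> wnorm D V > 0"
    and "\<And>V. V \<noteq> 0 \<Longrightarrow> wnorm (matrix_inv D) V > 0"
    and "\<And>V. wnorm D V \<ge> 0"
proof -
  have h: "hermf (*s) UNIV (\<lambda>X Y. ip2 (D *v X) Y)" by (rule hermf_D[OF D_herm D_pd])
  have wn: "wnorm D V = ipnorm (\<lambda>X Y. ip2 (D *v X) Y) V" for V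
    unfolding wnorm_def ipnorm_def by simp
  have inj: "V = 0" if "D *v V = 0" for V
    using D_pd[rule_format, of V] that by (auto simp: ip2_def)
  note mi = matrix_inv_props[OF inj]
  show DD: "D ** matrix_inv D = mat 1" by (rule mi(2))
  have DDv: "D *v (matrix_inv D *v V) = V" for V
    by (simp add: matrix_vector_mul_assoc DD)
  show wi: "wnorm (matrix_inv D) V = wnorm D (matrix_inv D *v V)" for V
  proof -
    have "Re (ip2 (D *v (matrix_inv D *v V)) (matrix_inv D *v V)) = Re (ip2 V (matrix_inv D *v V))"
      by (simp add: DDv)
    also have "\<dots> = Re (ip2 (matrix_inv D *v V) V)"
      by (subst ip2_sym) simp
    finally show ?thesis unfolding wnorm_def by simp
  qed
  show "cmod (ip2 V Y) \<le> wnorm (matrix_inv D) V * wnorm D Y" for V Y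
  proof -
    have "cmod (ip2 V Y) = cmod (ip2 (D *v (matrix_inv D *v V)) Y)" by (simp add: DDv)
    also have "\<dots> \<le> wnorm D (matrix_inv D *v V) * wnorm D Y"
      unfolding wn by (rule ipnorm_cs[OF h]) simp_all
    finally show ?thesis by (simp add: wi)
  qed
  show "wnorm (matrix_inv D) Z \<le> c" if b: "\<And>Y. cmod (ip2 Z Y) \<le> c * wnorm D Y" and c: "c \<ge> 0" for Z c
  proof -
    define Y where "Y = matrix_inv D *v Z"
    define t where "t = wnorm (matrix_inv D) Z"
    have t: "t = wnorm D Y" unfolding t_def Y_def by (rule wi)
    have t0: "t \<ge> 0" unfolding t wn using ipnorm_sq(2)[OF h] by simp
    have "t^2 = Re (ip2 (D *v Y) Y)" unfolding t wn using ipnorm_sq(1)[OF h] by simp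
    also have "\<dots> = Re (ip2 Z Y)" unfolding Y_def by (simp add: DDv)
    also have "\<dots> \<le> cmod (ip2 Z Y)" by (rule complex_Re_le_cmod)
    also have "\<dots> \<le> c * t" using b[of Y] t by simp
    finally have "t * t \<le> c * t" by (simp add: power2_eq_square)
    then have "t \<le> c" using t0 c by (cases "t = 0") auto
    then show ?thesis unfolding t_def .
  qed
  show pos: "wnorm D V > 0" if "V \<noteq> 0" for V
    using D_pd[rule_format, OF that] unfolding wnorm_def by simp
  show "wnorm (matrix_inv D) V > 0" if "V \<noteq> 0" for V
  proof -
    have "matrix_inv D *v V \<noteq> 0" using that DDv[of V] by auto
    then show ?thesis using pos wi by simp
  qed
  show "wnorm D V \<ge> 0" for V unfolding wn using ipnorm_sq(2)[OF h] by simp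
qed

lemma clinear_parts:
  assumes "clinear_on sc sc' S T"
  shows "\<And>x y. x \<in> S \<Longrightarrow> y \<in> S \<Longrightarrow> T (x + y) = T x + T y"
    and "\<And>c x. x \<in> S \<Longrightarrow> T (sc c x) = sc' c (T x)"
  using assms unfolding clinear_on_def by blast+

lemma clinear_zero:
  assumes "clinear_on sc sc' S T" "0 \<in> S"
  shows "T 0 = 0"
  using clinear_parts(1)[OF assms(1) assms(2) assms(2)] by simp

lemma cont_sesq_sesqf:
  assumes b: "cont_sesq sc H ipH b" and hH: "sesqf sc H ipH"
  shows "sesqf sc H b"
proof -
  note bb = b[unfolded cont_sesq_def]
  show ?thesis unfolding sesqf_def
    using sesqf_parts(1,2,3)[OF hH] bb[THEN conjunct1] bb[THEN conjunct2, THEN conjunct1]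
      bb[THEN conjunct2, THEN conjunct2, THEN conjunct1] bb[THEN conjunct2, THEN conjunct2, THEN conjunct2, THEN conjunct1]
    by (intro conjI; (intro ballI allI)?; simp)
qed

lemma aform_sesqf:
  assumes s0: "sesqf sc UNIV ip0" and hH: "sesqf sc H ipH"
    and Dlin: "clinear_on sc sc H Dop" and bcont: "cont_sesq sc H ipH b"
    and mu: "clinear_on sc sc UNIV mu" and eps: "clinear_on sc sc UNIV eps"
  shows "sesqf sc H (aform ip0 Dop b mu eps)"
proof -
  have sb: "sesqf sc H b" by (rule cont_sesq_sesqf[OF bcont hH])
  note i1 = sesqf_parts(4)[OF s0, simplified] and i2 = sesqf_parts(5)[OF s0, simplified]
   and i3 = sesqf_parts(6)[OF s0, simplified] and i4 = sesqf_parts(7)[OF s0, simplified]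
  note b1 = sesqf_parts(4)[OF sb] and b2 = sesqf_parts(5)[OF sb]
   and b3 = sesqf_parts(6)[OF sb] and b4 = sesqf_parts(7)[OF sb]
  note d1 = clinear_parts(1)[OF Dlin] and d2 = clinear_parts(2)[OF Dlin]
  note m1 = clinear_parts(1)[OF mu, simplified] and m2 = clinear_parts(2)[OF mu, simplified]
  note e1 = clinear_parts(1)[OF eps, simplified] and e2 = clinear_parts(2)[OF eps, simplified]
  show ?thesis unfolding sesqf_def
    using sesqf_parts(1,2,3)[OF hH]
    by (intro conjI; (intro ballI allI)?;
        simp add: aform_def i1 i2 i3 i4 b1 b2 b3 b4 d1 d2 m1 m2 e1 e2 algebra_simps)
qed

lemma diff_op_bound:
  fixes T1 T2 :: "'v::ab_group_add \<Rightarrow> 'v" and x0 :: 'v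
  assumes vs: "vector_space sc" and hf0: "hermf sc UNIV ip0" and def0: "\<forall>x. ip0 x x = 0 \<longrightarrow> x = 0"
    and b1: "bounded_op sc ip0 T1" and b2: "bounded_op sc ip0 T2" and nz: "x0 \<noteq> 0"
  shows "ipnorm ip0 (T1 x - T2 x) \<le> opnorm ip0 (\<lambda>v. T1 v - T2 v) * ipnorm ip0 x"
    and "opnorm ip0 (\<lambda>v. T1 v - T2 v) \<ge> 0"
proof -
  obtain K1 where K1: "\<forall>x. ipnorm ip0 (T1 x) \<le> K1 * ipnorm ip0 x" using b1 unfolding bounded_op_def by blast
  obtain K2 where K2: "\<forall>x. ipnorm ip0 (T2 x) \<le> K2 * ipnorm ip0 x" using b2 unfolding bounded_op_def by blast
  have K: "\<forall>x. ipnorm ip0 (T1 x - T2 x) \<le> (K1 + K2) * ipnorm ip0 x"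
  proof
    fix x
    have "ipnorm ip0 (T1 x - T2 x) \<le> ipnorm ip0 (T1 x) + ipnorm ip0 (T2 x)" by (rule ipnorm_diff_le[OF vs hf0])
    also have "\<dots> \<le> (K1 + K2) * ipnorm ip0 x" using K1 K2 by (simp add: distrib_right add_mono)
    finally show "ipnorm ip0 (T1 x - T2 x) \<le> (K1 + K2) * ipnorm ip0 x" .
  qed
  have z1: "T1 0 = 0" using clinear_zero[of sc sc UNIV T1] b1 unfolding bounded_op_def by simp
  have z2: "T2 0 = 0" using clinear_zero[of sc sc UNIV T2] b2 unfolding bounded_op_def by simp
  show "ipnorm ip0 (T1 x - T2 x) \<le> opnorm ip0 (\<lambda>v. T1 v - T2 v) * ipnorm ip0 x"
    using opnorm_bound[OF hf0 def0, of "\<lambda>v. T1 v - T2 v" "K1 + K2" x] K z1 z2 by simp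
  show "opnorm ip0 (\<lambda>v. T1 v - T2 v) \<ge> 0"
    using opnorm_nonneg[OF hf0 def0, of "\<lambda>v. T1 v - T2 v" "K1 + K2" x0] K nz by simp
qed

lemma ip_diff_left:
  assumes s0: "sesqf sc UNIV ip0"
  shows "ip0 (x - y) z = ip0 x z - ip0 y z"
  using sesqf_parts(4)[OF s0, of "x - y" y z] by simp

lemma aform_diff:
  assumes s0: "sesqf sc UNIV ip0"
  shows "aform ip0 Dop b mu1 eps1 u v - aform ip0 Dop b mu2 eps2 u v =
     ip0 (mu1 (Dop u) - mu2 (Dop u)) (Dop v) - ip0 (eps1 u - eps2 u) v"
  unfolding aform_def ip_diff_left[OF s0] by simp

theorem lemma5p1:
  fixes sc :: "complex \<Rightarrow> 'v::ab_group_add \<Rightarrow> 'v"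
    and H :: "'v set"
    and ip0 ipH :: "'v \<Rightarrow> 'v \<Rightarrow> complex"
    and Dop mu1 mu2 eps1 eps2 :: "'v \<Rightarrow> 'v"
    and b :: "'v \<Rightarrow> 'v \<Rightarrow> complex"
    and phi :: "'n::finite \<Rightarrow> 'v"
    and A1 A2 D :: "complex^'n^'n"
    and mminus mplus Cdis :: real
  assumes vs: "vector_space sc"
    and H0: "hilbert_space sc UNIV ip0"
    and H: "hilbert_space sc H ipH"
    and norm_le: "\<forall>v\<in>H. ipnorm ip0 v \<le> ipnorm ipH v"
    and Dlin: "clinear_on sc sc H Dop"
    and Dnorm: "\<forall>u\<in>H. ipnorm ip0 (Dop u) \<le> ipnorm ipH u"
    and bcont: "cont_sesq sc H ipH b"
    and mu1: "bounded_op sc ip0 mu1" and mu2: "bounded_op sc ip0 mu2"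
    and eps1: "bounded_op sc ip0 eps1" and eps2: "bounded_op sc ip0 eps2"
    and garding1: "\<exists>CG1>0. \<exists>CG2>0. \<forall>v\<in>H.
       cmod (aform ip0 Dop b mu1 eps1 v v + of_real (CG2 * (ipnorm ip0 v)\<^sup>2)) \<ge> CG1 * (ipnorm ipH v)\<^sup>2"
    and garding2: "\<exists>CG1>0. \<exists>CG2>0. \<forall>v\<in>H.
       cmod (aform ip0 Dop b mu2 eps2 v v + of_real (CG2 * (ipnorm ip0 v)\<^sup>2)) \<ge> CG1 * (ipnorm ipH v)\<^sup>2"
    and phiH: "\<forall>j. phi j \<in> H"
    and phi_indep: "\<forall>V. comb sc phi V = 0 \<longrightarrow> V = 0"
    and A1_def: "\<forall>i j. A1 $ i $ j = aform ip0 Dop b mu1 eps1 (phi j) (phi i)"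
    and A2_def: "\<forall>i j. A2 $ i $ j = aform ip0 Dop b mu2 eps2 (phi j) (phi i)"
    and D_herm: "\<forall>i j. D $ i $ j = cnj (D $ j $ i)"
    and D_pd: "\<forall>V. V \<noteq> 0 \<longrightarrow> Im (ip2 (D *v V) V) = 0 \<and> Re (ip2 (D *v V) V) > 0"
    and D_norm: "\<forall>V. ipnorm ipH (comb sc phi V) = wnorm D V"
    and mpos: "mminus > 0" "mplus > 0"
    and m_bounds: "\<forall>V. mminus * norm V \<le> ipnorm ip0 (comb sc phi V) \<and>
                        ipnorm ip0 (comb sc phi V) \<le> mplus * norm V"
    and Cdis_pos: "Cdis > 0"
    and infsup: "(INF u\<in>range (comb sc phi) - {0}. SUP v\<in>range (comb sc phi) - {0}.
                    ereal (cmod (aform ip0 Dop b mu2 eps2 u v) / (ipnorm ipH u * ipnorm ipH v)))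
                 \<ge> ereal (1 / Cdis)"
    and nondeg: "\<forall>v\<in>range (comb sc phi) - {0}.
                   (SUP u\<in>range (comb sc phi) - {0}. ereal (cmod (aform ip0 Dop b mu2 eps2 u v))) > 0"
  shows "invertible A2 \<and>
    max (matnorm (wnorm D) (mat 1 - matrix_inv A2 ** A1))
        (matnorm (wnorm (matrix_inv D)) (mat 1 - A1 ** matrix_inv A2))
      \<le> (opnorm ip0 (\<lambda>v. mu1 v - mu2 v) + opnorm ip0 (\<lambda>v. eps1 v - eps2 v)) * Cdis \<and>
    (mu1 = mu2 \<longrightarrow>
      max (matnorm norm (mat 1 - matrix_inv A2 ** A1))
          (matnorm norm (mat 1 - A1 ** matrix_inv A2))
        \<le> mplus / mminus * opnorm ip0 (\<lambda>v. eps1 v - eps2 v) * Cdis)"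
proof -
  let ?a1 = "aform ip0 Dop b mu1 eps1" and ?a2 = "aform ip0 Dop b mu2 eps2"
  let ?c = "comb sc phi"
  let ?n0 = "ipnorm ip0" and ?nH = "ipnorm ipH"
  let ?Emu = "opnorm ip0 (\<lambda>v. mu1 v - mu2 v)" and ?Eeps = "opnorm ip0 (\<lambda>v. eps1 v - eps2 v)"
  let ?Di = "matrix_inv D" and ?Ai = "matrix_inv A2"
  have c0: "cinner_space sc UNIV ip0" using H0 unfolding hilbert_space_def by (rule conjunct1)
  have cH: "cinner_space sc H ipH" using H unfolding hilbert_space_def by (rule conjunct1)
  have hf0: "hermf sc UNIV ip0" by (rule cinner_hermf[OF c0])
  have hfH: "hermf sc H ipH" by (rule cinner_hermf[OF cH])
  have s0: "sesqf sc UNIV ip0" by (rule hermf_sesqf[OF hf0])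
  have sH: "sesqf sc H ipH" by (rule hermf_sesqf[OF hfH])
  have def0: "\<forall>x. ip0 x x = 0 \<longrightarrow> x = 0"
    using c0[unfolded cinner_space_def, THEN conjunct2, THEN conjunct2, THEN conjunct2, THEN conjunct2,
        THEN conjunct2, THEN conjunct2, THEN conjunct2] by simp
  have defH: "\<forall>x\<in>H. ipH x x = 0 \<longrightarrow> x = 0"
    using cH[unfolded cinner_space_def, THEN conjunct2, THEN conjunct2, THEN conjunct2, THEN conjunct2,
        THEN conjunct2, THEN conjunct2, THEN conjunct2] .
  have phiH': "\<And>j. phi j \<in> H" using phiH by simp
  have combH: "?c V \<in> H" for V unfolding comb_def by (rule sesqf_sum_in[OF sH phiH']) simp
  have sa1: "sesqf sc H ?a1"
    by (rule aform_sesqf[OF s0 sH Dlin bcont]) (use mu1 eps1 in \<open>simp_all add: bounded_op_def\<close>)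
  have sa2: "sesqf sc H ?a2"
    by (rule aform_sesqf[OF s0 sH Dlin bcont]) (use mu2 eps2 in \<open>simp_all add: bounded_op_def\<close>)
  have E1: "?a1 (?c V) (?c Y) = ip2 (A1 *v V) Y" for V Y by (rule sesqf_matrix[OF sa1 phiH' A1_def])
  have E2: "?a2 (?c V) (?c Y) = ip2 (A2 *v V) Y" for V Y by (rule sesqf_matrix[OF sa2 phiH' A2_def])
  define e0 where "e0 = (axis undefined 1 :: complex^'n)"
  have e0: "e0 \<noteq> 0" unfolding e0_def by (simp add: axis_def vec_eq_iff)
  have x0: "?c e0 \<noteq> 0" using phi_indep e0 by blast
  note Emu = diff_op_bound[OF vs hf0 def0 mu1 mu2 x0]
  note Eeps = diff_op_bound[OF vs hf0 def0 eps1 eps2 x0]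
  note DF = D_facts[OF D_herm D_pd]
  have nH_w: "?nH (?c V) = wnorm D V" for V using D_norm by simp
  have n0ge: "?n0 x \<ge> 0" for x using ipnorm_sq(2)[OF hf0] by simp
  have nHge: "?nH x \<ge> 0" if "x \<in> H" for x using ipnorm_sq(2)[OF hfH that] .
  have n0H: "?n0 (?c V) \<le> wnorm D V" for V using norm_le combH nH_w by metis
  have DnH: "?n0 (Dop (?c V)) \<le> wnorm D V" for V using Dnorm combH nH_w by metis
  have mlow: "mminus * norm V \<le> wnorm D V" for V using m_bounds n0H order_trans by blast
  have mup: "?n0 (?c V) \<le> mplus * norm V" for V using m_bounds by blast
  have diffb: "cmod (?a1 (?c V) (?c Y) - ?a2 (?c V) (?c Y))
      \<le> ?Emu * ?n0 (Dop (?c V)) * ?n0 (Dop (?c Y)) + ?Eeps * ?n0 (?c V) * ?n0 (?c Y)" for V Y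
  proof -
    let ?u = "?c V" and ?v = "?c Y"
    have "cmod (?a1 ?u ?v - ?a2 ?u ?v) \<le> cmod (ip0 (mu1 (Dop ?u) - mu2 (Dop ?u)) (Dop ?v)) + cmod (ip0 (eps1 ?u - eps2 ?u) ?v)"
      unfolding aform_diff[OF s0] by (rule norm_triangle_ineq4)
    also have "\<dots> \<le> ?n0 (mu1 (Dop ?u) - mu2 (Dop ?u)) * ?n0 (Dop ?v) + ?n0 (eps1 ?u - eps2 ?u) * ?n0 ?v"
      by (intro add_mono ipnorm_cs[OF hf0]) simp_all
    also have "\<dots> \<le> (?Emu * ?n0 (Dop ?u)) * ?n0 (Dop ?v) + (?Eeps * ?n0 ?u) * ?n0 ?v"
      by (intro add_mono mult_right_mono Emu(1) Eeps(1) n0ge)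
    finally show ?thesis by simp
  qed
  have Kc0: "?Emu + ?Eeps \<ge> 0" using Emu(2) Eeps(2) by simp
  have diffH: "cmod (ip2 (A2 *v V) Y - ip2 (A1 *v V) Y) \<le> (?Emu + ?Eeps) * wnorm D V * wnorm D Y" for V Y
  proof -
    have "cmod (ip2 (A2 *v V) Y - ip2 (A1 *v V) Y) = cmod (?a1 (?c V) (?c Y) - ?a2 (?c V) (?c Y))"
      unfolding E1 E2 by (simp add: norm_minus_commute)
    also have "\<dots> \<le> ?Emu * ?n0 (Dop (?c V)) * ?n0 (Dop (?c Y)) + ?Eeps * ?n0 (?c V) * ?n0 (?c Y)" by (rule diffb)
    also have "\<dots> \<le> ?Emu * wnorm D V * wnorm D Y + ?Eeps * wnorm D V * wnorm D Y"
      by (intro add_mono mult_mono mult_left_mono DnH n0H Emu(2) Eeps(2) n0ge mult_nonneg_nonneg DF(7))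
    finally show ?thesis by (simp add: algebra_simps)
  qed
  have diff0: "cmod (ip2 (A2 *v V) Y - ip2 (A1 *v V) Y) \<le> ?Eeps * ?n0 (?c V) * ?n0 (?c Y)" if mu: "mu1 = mu2" for V Y
  proof -
    let ?u = "?c V" and ?v = "?c Y"
    have "cmod (ip2 (A2 *v V) Y - ip2 (A1 *v V) Y) = cmod (?a1 ?u ?v - ?a2 ?u ?v)"
      unfolding E1 E2 by (simp add: norm_minus_commute)
    also have "\<dots> = cmod (ip0 (eps1 ?u - eps2 ?u) ?v)"
      unfolding aform_diff[OF s0] using mu sesqf_zero(1)[OF s0] by simp
    also have "\<dots> \<le> ?n0 (eps1 ?u - eps2 ?u) * ?n0 ?v" by (rule ipnorm_cs[OF hf0]) simp_all
    also have "\<dots> \<le> (?Eeps * ?n0 ?u) * ?n0 ?v" by (intro mult_right_mono Eeps(1) n0ge)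
    finally show ?thesis by simp
  qed
  have F4: "wnorm D W \<le> Cdis * c" if b: "\<And>Y. cmod (ip2 (A2 *v W) Y) \<le> c * wnorm D Y" and c: "c \<ge> 0" for W c
  proof (cases "W = 0")
    case True
    then show ?thesis using c Cdis_pos by (simp add: wnorm_def ip2_def)
  next
    case False
    let ?u = "?c W"
    have u0: "?u \<noteq> 0" using phi_indep False by blast
    have uin: "?u \<in> range ?c - {0}" using u0 by blast
    have nu: "?nH ?u > 0" using nH_w DF(5)[OF False] by simp
    have "ereal (1 / Cdis) \<le> (SUP v\<in>range ?c - {0}. ereal (cmod (?a2 ?u v) / (?nH ?u * ?nH v)))"
      using infsup INF_lower[OF uin, of "\<lambda>u. SUP v\<in>range ?c - {0}. ereal (cmod (?a2 u v) / (?nH u * ?nH v))"]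
      by (rule order_trans)
    also have "\<dots> \<le> ereal (c / ?nH ?u)"
    proof (rule SUP_least)
      fix v assume v: "v \<in> range ?c - {0}"
      then obtain Y where Y: "v = ?c Y" and v0: "v \<noteq> 0" by blast
      have nv: "?nH v > 0" using ipnorm_pos[OF hfH combH defH] Y v0 by simp
      have "cmod (?a2 ?u v) \<le> c * ?nH v" using b[of Y] Y E2 nH_w by simp
      then have "cmod (?a2 ?u v) / (?nH ?u * ?nH v) \<le> c * ?nH v / (?nH ?u * ?nH v)"
        using nu nv by (intro divide_right_mono) simp_all
      also have "\<dots> = c / ?nH ?u" using nv by simp
      finally show "ereal (cmod (?a2 ?u v) / (?nH ?u * ?nH v)) \<le> ereal (c / ?nH ?u)" by simp
    qed
    finally have "1 / Cdis \<le> c / ?nH ?u" by simp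
    then have "?nH ?u \<le> Cdis * c" using nu Cdis_pos by (simp add: field_simps)
    then show ?thesis using nH_w by simp
  qed
  have injA2: "W = 0" if "A2 *v W = 0" for W
  proof -
    have "wnorm D W \<le> Cdis * 0" by (rule F4) (simp_all add: that ip2_def)
    then show ?thesis using DF(5)[of W] by (cases "W = 0") auto
  qed
  note AI = matrix_inv_props[OF injA2]
  have A2Ai: "A2 *v (?Ai *v V) = V" for V by (metis matrix_vector_mul_assoc AI(2) matrix_vector_mul_lid)
  have Wf: "(mat 1 - ?Ai ** A1) *v V = V - ?Ai *v (A1 *v V)" for V
    by (simp add: matrix_vector_mult_diff_rdistrib matrix_vector_mul_assoc)
  have AWf: "A2 *v ((mat 1 - ?Ai ** A1) *v V) = A2 *v V - A1 *v V" for V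
    by (simp add: Wf matrix_vector_mult_diff_distrib A2Ai)
  have Zf: "(mat 1 - A1 ** ?Ai) *v V = A2 *v (?Ai *v V) - A1 *v (?Ai *v V)" for V
  proof -
    have "(mat 1 - A1 ** ?Ai) *v V = V - A1 *v (?Ai *v V)"
      by (simp add: matrix_vector_mult_diff_rdistrib matrix_vector_mul_assoc)
    then show ?thesis by (simp only: A2Ai)
  qed
  have wD0: "wnorm D V \<ge> 0" for V by (rule DF(7))
  have c1: "matnorm (wnorm D) (mat 1 - ?Ai ** A1) \<le> (?Emu + ?Eeps) * Cdis"
  proof (rule matnorm_le)
    fix V :: "complex^'n" assume V: "V \<noteq> 0"
    let ?W = "(mat 1 - ?Ai ** A1) *v V"
    have "wnorm D ?W \<le> Cdis * ((?Emu + ?Eeps) * wnorm D V)"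
    proof (rule F4)
      fix Y
      show "cmod (ip2 (A2 *v ?W) Y) \<le> (?Emu + ?Eeps) * wnorm D V * wnorm D Y"
        unfolding AWf ip2_diff by (rule diffH)
    qed (use Kc0 wD0 in simp)
    then show "wnorm D ?W \<le> (?Emu + ?Eeps) * Cdis * wnorm D V" by (simp add: algebra_simps)
  qed (rule DF(5))
  have c2: "matnorm (wnorm ?Di) (mat 1 - A1 ** ?Ai) \<le> (?Emu + ?Eeps) * Cdis"
  proof (rule matnorm_le)
    fix V :: "complex^'n" assume V: "V \<noteq> 0"
    let ?W = "?Ai *v V"
    have wiV: "wnorm ?Di V \<ge> 0" using DF(6)[OF V] by simp
    have bW: "wnorm D ?W \<le> Cdis * wnorm ?Di V"
    proof (rule F4)
      fix Y show "cmod (ip2 (A2 *v ?W) Y) \<le> wnorm ?Di V * wnorm D Y" unfolding A2Ai by (rule DF(3))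
    qed (rule wiV)
    show "wnorm ?Di ((mat 1 - A1 ** ?Ai) *v V) \<le> (?Emu + ?Eeps) * Cdis * wnorm ?Di V"
    proof (rule DF(4))
      fix Y
      have "cmod (ip2 ((mat 1 - A1 ** ?Ai) *v V) Y) \<le> (?Emu + ?Eeps) * wnorm D ?W * wnorm D Y"
        unfolding Zf ip2_diff by (rule diffH)
      also have "\<dots> \<le> (?Emu + ?Eeps) * (Cdis * wnorm ?Di V) * wnorm D Y"
        by (intro mult_right_mono mult_left_mono bW Kc0 wD0)
      finally show "cmod (ip2 ((mat 1 - A1 ** ?Ai) *v V) Y) \<le> (?Emu + ?Eeps) * Cdis * wnorm ?Di V * wnorm D Y"
        by (simp add: algebra_simps)
    qed (use Kc0 Cdis_pos wiV in simp)
  qed (rule DF(6))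
  have c3: "matnorm norm (mat 1 - ?Ai ** A1) \<le> mplus / mminus * ?Eeps * Cdis" if mu: "mu1 = mu2"
  proof (rule matnorm_le)
    fix V :: "complex^'n" assume V: "V \<noteq> 0"
    let ?W = "(mat 1 - ?Ai ** A1) *v V"
    have "wnorm D ?W \<le> Cdis * (?Eeps * (mplus * norm V))"
    proof (rule F4)
      fix Y
      have "cmod (ip2 (A2 *v ?W) Y) \<le> ?Eeps * ?n0 (?c V) * ?n0 (?c Y)"
        unfolding AWf ip2_diff by (rule diff0[OF mu])
      also have "\<dots> \<le> ?Eeps * (mplus * norm V) * wnorm D Y"
        by (intro mult_mono mult_left_mono mup n0H Eeps(2) n0ge mult_nonneg_nonneg) (use mpos in simp_all)
      finally show "cmod (ip2 (A2 *v ?W) Y) \<le> ?Eeps * (mplus * norm V) * wnorm D Y" .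
    qed (use Eeps(2) mpos in simp)
    then have "mminus * norm ?W \<le> Cdis * (?Eeps * (mplus * norm V))" using mlow[of ?W] by linarith
    then have "norm ?W \<le> Cdis * (?Eeps * (mplus * norm V)) / mminus" using mpos by (simp add: field_simps)
    then show "norm ?W \<le> mplus / mminus * ?Eeps * Cdis * norm V" by (simp add: field_simps)
  qed simp
  have c4: "matnorm norm (mat 1 - A1 ** ?Ai) \<le> mplus / mminus * ?Eeps * Cdis" if mu: "mu1 = mu2"
  proof (rule matnorm_le)
    fix V :: "complex^'n" assume V: "V \<noteq> 0"
    let ?W = "?Ai *v V"
    have bW: "wnorm D ?W \<le> Cdis * (norm V / mminus)"
    proof (rule F4)
      fix Y
      have "cmod (ip2 (A2 *v ?W) Y) \<le> norm V * norm Y" unfolding A2Ai by (rule cs_2)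
      also have "\<dots> \<le> norm V * (wnorm D Y / mminus)"
        using mlow[of Y] mpos by (intro mult_left_mono) (simp_all add: field_simps)
      finally show "cmod (ip2 (A2 *v ?W) Y) \<le> norm V / mminus * wnorm D Y" by simp
    qed (use mpos in simp)
    show "norm ((mat 1 - A1 ** ?Ai) *v V) \<le> mplus / mminus * ?Eeps * Cdis * norm V"
    proof (rule dual_2)
      fix Y
      have "cmod (ip2 ((mat 1 - A1 ** ?Ai) *v V) Y) \<le> ?Eeps * ?n0 (?c ?W) * ?n0 (?c Y)"
        unfolding Zf ip2_diff by (rule diff0[OF mu])
      also have "\<dots> \<le> ?Eeps * (Cdis * (norm V / mminus)) * (mplus * norm Y)"
        by (intro mult_mono mult_left_mono mup order_trans[OF n0H bW] Eeps(2) n0ge mult_nonneg_nonneg)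
          (use mpos Cdis_pos in simp_all)
      finally show "cmod (ip2 ((mat 1 - A1 ** ?Ai) *v V) Y) \<le> mplus / mminus * ?Eeps * Cdis * norm V * norm Y"
        by (simp add: field_simps)
    qed (use mpos Eeps(2) Cdis_pos in simp)
  qed simp
  show ?thesis using AI(1) c1 c2 c3 c4 by simp
qed

end
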